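(* Let $n\in\mathbb{N}$ and let $K\subset\mathbb{R}^n$ be a strictly convex convex body (not necessarily $0$-symmetric). Then \[ G(K)\le 2\bigl(2^{n-1}-1\bigr)\left\lceil \tfrac{2}{3}\bigl(G(\operatorname{int}K)+1\bigr)\right\rceil + G(\operatorname{int}K)+2. \]
   Context: A convex body in $\mathbb{R}^n$ is a compact convex set with nonempty interior. It is strictly convex if its boundary contains no nondegenerate line segment. For $S\subset\mathbb{R}^n$, $G(S)=|S\cap\mathbb{Z}^n|$, and $\operatorname{int}K$ denotes the interior of $K$. $\lceil x\rceil$ is the smallest integer $\ge x$. *)

theory Defs
  imports "HOL-Analysis.Analysis"
begin

definition convex_body :: "(real ^ 'n) set \<Rightarrow> bool" where
  "convex_body K \<longleftrightarrow> compact K \<and> convex K \<and> interior K \<noteq> {}"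

definition strictly_convex_body :: "(real ^ 'n) set \<Rightarrow> bool" where
  "strictly_convex_body K \<longleftrightarrow> convex_body K \<and>
     (\<forall>x y. x \<noteq> y \<longrightarrow> \<not> closed_segment x y \<subseteq> frontier K)"

definition lattice_points :: "(real ^ 'n) set" where
  "lattice_points = {x. \<forall>i. x $ i \<in> \<int>}"

definition G :: "(real ^ 'n) set \<Rightarrow> nat" where
  "G S = card (S \<inter> lattice_points)"

end

theory Submission
  imports Defs "HOL-Library.Cardinality"
begin


lemma mid_aux:
  fixes x y w :: "real ^ 'n"
  assumes K: "convex K" and w: "w \<in> interior K" and y: "y \<in> K"
    and wt: "w = (1 - t) *\<^sub>R x + t *\<^sub>R y" and t0: "0 \<le> t" and t1: "t \<le> 1/2" and xy: "x \<noteq> y"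
  shows "(1/2) *\<^sub>R (x + y) \<in> interior K"
proof (cases "t = 1/2")
  case True then have "w = (1/2) *\<^sub>R (x + y)" unfolding wt True by (simp add: scaleR_right_distrib)
  then show ?thesis using w by simp
next
  case False
  define s where "s = (1/2 - t) / (1 - t)"
  have s0: "0 < s" and s1: "s < 1" using t0 t1 False by (auto simp: s_def field_simps)
  have tn: "1 - t \<noteq> 0" using t1 by simp
  have h: "(1 - s) * (1 - t) = 1/2" using t1 tn by (simp add: s_def field_simps)
  have h2: "(1 - s) * t + s = 1/2" using h by (simp add: algebra_simps)
  have h3: "(1 - s) *\<^sub>R w + s *\<^sub>R y = ((1-s)*(1-t)) *\<^sub>R x + ((1-s)*t + s) *\<^sub>R y"
    unfolding wt by (simp add: algebra_simps)
  have eq: "(1/2) *\<^sub>R (x + y) = (1 - s) *\<^sub>R w + s *\<^sub>R y"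
    unfolding h3 h h2 by (simp add: scaleR_right_distrib)
  have "w \<noteq> y"
  proof
    assume "w = y"
    then have "(1 - t) *\<^sub>R (x - y) = 0" using wt by (simp add: algebra_simps)
    then show False using t1 xy by simp
  qed
  then have "(1/2) *\<^sub>R (x + y) \<in> open_segment w y"
    using s0 s1 eq by (auto simp: in_segment)
  moreover have "open_segment w y \<subseteq> interior K"
    using in_interior_closure_convex_segment[OF K w] y closure_subset by blast
  ultimately show ?thesis by blast
qed

lemma mid_interior:
  fixes x y :: "real ^ 'n"
  assumes K: "convex K" "closed K" and x: "x \<in> K" and y: "y \<in> K" and xy: "x \<noteq> y"
    and nf: "\<not> closed_segment x y \<subseteq> frontier K"
  shows "(1/2) *\<^sub>R (x + y) \<in> interior K"
proof -
  obtain w where w: "w \<in> closed_segment x y" "w \<notin> frontier K" using nf by blast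
  have "w \<in> K" using w(1) K(1) x y closed_segment_subset by blast
  then have wi: "w \<in> interior K" using w(2) K(2) by (simp add: frontier_def closure_closed)
  obtain t where t: "0 \<le> t" "t \<le> 1" "w = (1 - t) *\<^sub>R x + t *\<^sub>R y" using w(1) by (auto simp: in_segment)
  show ?thesis
  proof (cases "t \<le> 1/2")
    case True show ?thesis by (rule mid_aux[OF K(1) wi y t(3) t(1) True xy])
  next
    case False
    have "w = (1 - (1 - t)) *\<^sub>R y + (1 - t) *\<^sub>R x" using t by (simp add: algebra_simps)
    from mid_aux[OF K(1) wi x this] False t xy show ?thesis by (simp add: add.commute)
  qed
qed



definition Mid :: "real set \<Rightarrow> real set" where
  "Mid A = {(s+t)/2 | s t. s \<in> A \<and> t \<in> A \<and> s < t}"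

lemma finite_Mid: "finite A \<Longrightarrow> finite (Mid A)"
proof -
  assume "finite A"
  moreover have "Mid A \<subseteq> (\<lambda>(s,t). (s+t)/2) ` (A \<times> A)" unfolding Mid_def by force
  ultimately show ?thesis by (meson finite_SigmaI finite_imageI finite_subset)
qed

lemma Mid_mono: "A \<subseteq> B \<Longrightarrow> Mid A \<subseteq> Mid B" by (auto simp: Mid_def)

lemma chain_aux:
  assumes "finite A"
  shows "A \<noteq> {} \<longrightarrow> 2 * card A \<le> card (Mid A \<union> {Min A}) + 2"
  using assms
proof (induction A rule: finite_linorder_max_induct)
  case empty then show ?case by simp
next
  case (insert b A)
  show ?case
  proof (cases "A = {}")
    case True then show ?thesis by simp
  next
    case False
    define T where "T = Mid A \<union> {Min A}"
    define T' where "T' = Mid (insert b A) \<union> {Min (insert b A)}"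
    define m where "m = Max A"
    have mA: "m \<in> A" using False insert(1) by (simp add: m_def)
    have bA: "b \<notin> A" using insert(2) by auto
    have minA: "Min (insert b A) = Min A"
      using False insert(1,2) Min_in[OF insert(1) False] by (auto simp: min_def dest: leD)
    have finT: "finite T" using insert(1) finite_Mid by (simp add: T_def)
    have finT': "finite T'" using insert(1) finite_Mid by (simp add: T'_def)
    have TT': "T \<subseteq> T'" using Mid_mono[of A "insert b A"] by (auto simp: T_def T'_def minA)
    have Tle: "\<forall>z\<in>T. z \<le> m"
    proof
      fix z assume "z \<in> T"
      then consider "z = Min A" | u v where "u \<in> A" "v \<in> A" "u < v" "z = (u+v)/2"
        by (auto simp: T_def Mid_def)
      then show "z \<le> m"
      proof cases
        case 1 then show ?thesis using insert(1) False mA by (simp add: m_def)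
      next
        case 2 then have "v \<le> m" using insert(1) by (simp add: m_def)
        then show ?thesis using 2 by simp
      qed
    qed
    have p: "(m+b)/2 \<in> T'" using mA insert(2) by (auto simp: T'_def Mid_def)
    have pT: "(m+b)/2 \<notin> T" using Tle mA insert(2) by force
    have IH: "2 * card A \<le> card T + 2" using insert(3) False by (simp add: T_def)
    have cA: "card (insert b A) = card A + 1" using insert(1) bA by simp
    show ?thesis
    proof (cases "card A = 1")
      case True
      have "Min A \<in> T" by (simp add: T_def)
      then have "card {Min A, (m+b)/2} \<le> card T'"
        using p TT' finT' by (intro card_mono) auto
      moreover have "Min A \<noteq> (m+b)/2"
      proof
        assume "Min A = (m+b)/2"
        then have "(m+b)/2 \<in> T" using \<open>Min A \<in> T\<close> by (simp only:)
        then show False using pT by (simp only:)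
      qed
      ultimately have "2 \<le> card T'" by simp
      then show ?thesis using True cA by (simp add: T'_def)
    next
      case False2: False
      have "card A \<ge> 2" proof -
        have "card A \<noteq> 0" using False insert(1) by simp
        then show ?thesis using False2 by linarith
      qed
      define A' where "A' = A - {m}"
      have A'ne: "A' \<noteq> {}"
      proof
        assume "A' = {}"
        then have "A \<subseteq> {m}" by (auto simp: A'_def)
        then have "card A \<le> card {m}" by (intro card_mono) auto
        then show False using \<open>card A \<ge> 2\<close> by simp
      qed
      have finA': "finite A'" using insert(1) by (simp add: A'_def)
      define s2 where "s2 = Max A'"
      have s2A: "s2 \<in> A" "s2 \<noteq> m" using Max_in[OF finA' A'ne] by (auto simp: s2_def A'_def)
      have s2m: "s2 < m" using s2A insert(1) by (simp add: m_def order.not_eq_order_implies_strict)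
      have Tle2: "\<forall>z\<in>T. z \<le> (s2+m)/2"
      proof
        fix z assume "z \<in> T"
        then consider "z = Min A" | u v where "u \<in> A" "v \<in> A" "u < v" "z = (u+v)/2"
          by (auto simp: T_def Mid_def)
        then show "z \<le> (s2+m)/2"
        proof cases
          case 1 then have "z \<le> s2" using insert(1) s2A by simp
          then show ?thesis using s2m by simp
        next
          case 2 then have "v \<le> m" using insert(1) by (simp add: m_def)
          then have "u \<noteq> m" using 2 by simp
          then have "u \<le> s2" using 2 finA' by (simp add: s2_def A'_def)
          then show ?thesis using 2 \<open>v \<le> m\<close> by simp
        qed
      qed
      have q: "(s2+b)/2 \<in> T'" using s2A insert(2) by (auto simp: T'_def Mid_def)
      have qT: "(s2+b)/2 \<notin> T" using Tle2 s2A insert(2) mA by force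
      have pT2: "(m+b)/2 \<notin> T" using pT .
      have pq: "(m+b)/2 \<noteq> (s2+b)/2" using s2m by simp
      have "card (T \<union> {(m+b)/2, (s2+b)/2}) \<le> card T'"
        using p q TT' finT' by (intro card_mono) auto
      moreover have "card (T \<union> {(m+b)/2, (s2+b)/2}) = card T + 2"
        using finT qT pT2 pq by simp
      ultimately show ?thesis using IH cA by (simp add: T'_def)
    qed
  qed
qed

lemma chain:
  "finite A \<Longrightarrow> A \<noteq> {} \<Longrightarrow> 2 * card A \<le> card (Mid A \<union> {Min A}) + 2"
  using chain_aux by blast



lemma finite_lat:
  fixes K :: "(real ^ 'n) set"
  assumes "bounded K"
  shows "finite (K \<inter> lattice_points)"
proof -
  obtain B where B: "\<forall>x\<in>K. norm x \<le> B" using assms by (auto simp: bounded_iff)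
  define R where "R = \<lceil>B\<rceil>"
  have sub: "K \<inter> lattice_points \<subseteq> (\<lambda>f. \<chi> i. of_int (f i)) ` (Pi\<^sub>E UNIV (\<lambda>_. {-R..R}))"
  proof
    fix x assume x: "x \<in> K \<inter> lattice_points"
    have xi: "of_int \<lfloor>x $ i\<rfloor> = x $ i" for i
    proof -
      have "x $ i \<in> \<int>" using x by (auto simp: lattice_points_def)
      then obtain k where "x $ i = of_int k" by (auto elim: Ints_cases)
      then show ?thesis by simp
    qed
    have "\<And>i. \<bar>x $ i\<bar> \<le> B" using x B component_le_norm_cart order_trans by blast
    then have "\<And>i. \<lfloor>x $ i\<rfloor> \<in> {-R..R}" unfolding R_def
      by (smt (verit, best) atLeastAtMost_iff ceiling_mono ceiling_of_int floor_le_ceiling le_floor_iff of_int_minus xi)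
    then have m1: "(\<lambda>i. \<lfloor>x $ i\<rfloor>) \<in> Pi\<^sub>E UNIV (\<lambda>_. {-R..R})" by (simp add: PiE_UNIV_domain)
    have m2: "x = (\<chi> i. of_int (\<lfloor>x $ i\<rfloor>))" unfolding vec_eq_iff by (simp only: vec_lambda_beta xi simp_thms)
    show "x \<in> (\<lambda>f. \<chi> i. of_int (f i)) ` (Pi\<^sub>E UNIV (\<lambda>_. {-R..R}))" using m1 m2 by (rule_tac image_eqI[where x="\<lambda>i. \<lfloor>x $ i\<rfloor>"]) simp_all
  qed
  have "finite (Pi\<^sub>E (UNIV::'n set) (\<lambda>_. {-R..R}))" by (intro finite_PiE) auto
  then have "finite ((\<lambda>f. (\<chi> i. of_int (f i)) :: real ^ 'n) ` (Pi\<^sub>E UNIV (\<lambda>_. {-R..R})))" by (rule finite_imageI)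
  then show ?thesis by (rule finite_subset[OF sub])
qed

lemma ex_v:
  fixes D :: "(real ^ 'n) set"
  assumes "finite D"
  shows "\<exists>v. \<forall>d\<in>D. d \<noteq> 0 \<longrightarrow> v \<bullet> d \<noteq> 0"
  using assms
proof (induction D)
  case empty then show ?case by simp
next
  case (insert d D)
  then obtain v where v: "\<forall>e\<in>D. e \<noteq> 0 \<longrightarrow> v \<bullet> e \<noteq> 0" by blast
  show ?case
  proof (cases "d = 0 \<or> v \<bullet> d \<noteq> 0")
    case True then show ?thesis using v by auto
  next
    case False
    have "finite (insert 0 ((\<lambda>e. - (v \<bullet> e) / (d \<bullet> e)) ` D))" using insert(1) by simp
    then obtain t :: real where t: "t \<notin> insert 0 ((\<lambda>e. - (v \<bullet> e) / (d \<bullet> e)) ` D)"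
      using ex_new_if_finite[OF infinite_UNIV_char_0] by blast
    define w where "w = v + t *\<^sub>R d"
    have "w \<bullet> d \<noteq> 0" using False t by (simp add: w_def inner_add_left)
    moreover have "w \<bullet> e \<noteq> 0" if e: "e \<in> D" "e \<noteq> 0" for e
    proof (cases "d \<bullet> e = 0")
      case True then show ?thesis using v e by (simp add: w_def inner_add_left inner_add_right inner_commute)
    next
      case False2: False
      have "t \<noteq> - (v \<bullet> e) / (d \<bullet> e)" using t e by auto
      have we: "w \<bullet> e = v \<bullet> e + t * (d \<bullet> e)" by (simp add: w_def inner_add_left)
      show ?thesis
      proof
        assume "w \<bullet> e = 0"
        then have "t * (d \<bullet> e) = - (v \<bullet> e)" using we by simp
        then have "t = - (v \<bullet> e) / (d \<bullet> e)" using False2 by (simp add: field_simps)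
        then show False using \<open>t \<noteq> - (v \<bullet> e) / (d \<bullet> e)\<close> by simp
      qed
    qed
    ultimately show ?thesis by auto
  qed
qed



theorem theorem1p2:
  fixes K :: "(real ^ 'n) set"
  assumes "strictly_convex_body K"
  shows "real (G K) \<le> 2 * (2 ^ (CARD('n) - 1) - 1)
           * real_of_int \<lceil>(2/3) * (real (G (interior K)) + 1)\<rceil>
         + real (G (interior K)) + 2"
proof -
  have cb: "compact K" "convex K" and nseg: "\<And>x y. x \<noteq> y \<Longrightarrow> \<not> closed_segment x y \<subseteq> frontier K"
    using assms by (auto simp: strictly_convex_body_def convex_body_def)
  have clK: "closed K" and bdK: "bounded K" using cb compact_imp_closed compact_imp_bounded by auto
  define S where "S = K \<inter> (lattice_points :: (real ^ 'n) set)"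
  define I where "I = interior K \<inter> (lattice_points :: (real ^ 'n) set)"
  define g where "g = card I"
  have GK: "G K = card S" by (simp add: G_def S_def)
  have GI: "G (interior K) = g" by (simp add: G_def I_def g_def)
  have finS: "finite S" unfolding S_def by (rule finite_lat[OF bdK])
  have IS: "I \<subseteq> S" using interior_subset by (auto simp: I_def S_def)
  have finI: "finite I" using finS IS finite_subset by blast
  obtain v :: "real ^ 'n" where v: "\<forall>d\<in>(\<lambda>(x,y). x - y) ` (S \<times> S). d \<noteq> 0 \<longrightarrow> v \<bullet> d \<noteq> 0"
    using ex_v[of "(\<lambda>(x,y). x - y) ` (S \<times> S)"] finS by blast
  define f where "f x = v \<bullet> x" for x
  have injf: "inj_on f S"
  proof (rule inj_onI)
    fix x y assume xy: "x \<in> S" "y \<in> S" "f x = f y"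
    then have "v \<bullet> (x - y) = 0" by (simp add: f_def inner_diff_right)
    moreover have "x - y \<in> (\<lambda>(x,y). x - y) ` (S \<times> S)" using xy by force
    ultimately show "x = y"
    proof -
      assume h1: "v \<bullet> (x - y) = 0" and h2: "x - y \<in> (\<lambda>(x,y). x - y) ` (S \<times> S)"
      have "x - y \<noteq> 0 \<longrightarrow> v \<bullet> (x - y) \<noteq> 0" using v h2 by blast
      then show "x = y" using h1 by simp
    qed
  qed
  define par :: "real ^ 'n \<Rightarrow> ('n \<Rightarrow> bool)" where "par x = (\<lambda>i. even \<lfloor>x $ i\<rfloor>)" for x
  have mid: "(1/2) *\<^sub>R (x + y) \<in> I" if xy: "x \<in> S" "y \<in> S" "x \<noteq> y" "par x = par y" for x y
  proof -
    have "(1/2) *\<^sub>R (x + y) \<in> interior K"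
      using mid_interior[OF cb(2) clK _ _ xy(3) nseg[OF xy(3)]] xy(1,2) by (auto simp: S_def)
    moreover have "(1/2) *\<^sub>R (x + y) \<in> lattice_points"
      unfolding lattice_points_def
    proof (intro CollectI allI)
      fix i
      have "x $ i \<in> \<int>" "y $ i \<in> \<int>" using xy(1,2) by (auto simp: S_def lattice_points_def)
      then obtain a b where ab: "x $ i = of_int a" "y $ i = of_int b" by (auto elim!: Ints_cases)
      have "par x i = par y i" using xy(4) by simp
      then have "even a = even b" using ab by (simp add: par_def)
      then have "even (a + b)" by simp
      then obtain c where c: "a + b = 2 * c" by (erule evenE)
      have "((1/2) *\<^sub>R (x + y)) $ i = of_int c" using ab c
        by (simp add: field_simps)
      then show "((1/2) *\<^sub>R (x + y)) $ i \<in> \<int>" by simp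
    qed
    ultimately show ?thesis by (simp add: I_def)
  qed
  have fmid: "f ((1/2) *\<^sub>R (x + y)) = (f x + f y) / 2" for x y
    by (simp add: f_def inner_add_right)
  define C where "C c = {x \<in> S. par x = c}" for c
  have finC: "finite (C c)" for c using finS by (simp add: C_def)
  have CS: "C c \<subseteq> S" for c by (auto simp: C_def)
  have MidSub: "Mid (f ` C c) \<subseteq> f ` I" for c
  proof
    fix z assume "z \<in> Mid (f ` C c)"
    then obtain x y where xy: "x \<in> C c" "y \<in> C c" "f x < f y" "z = (f x + f y)/2"
      by (auto simp: Mid_def)
    then have "x \<noteq> y" by auto
    then have "(1/2) *\<^sub>R (x + y) \<in> I" using mid xy by (auto simp: C_def)
    then show "z \<in> f ` I" using fmid xy(4) by (metis image_eqI)
  qed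
  have cardfC: "card (f ` C c) = card (C c)" for c
    using inj_on_subset[OF injf CS] by (simp add: card_image)
  have cardfI: "card (f ` I) \<le> g" by (simp add: g_def card_image_le finI)
  have finfI: "finite (f ` I)" using finI by simp
  have claim1: "2 * card (C c) \<le> g + 3" for c
  proof (cases "C c = {}")
    case True then show ?thesis by simp
  next
    case False
    have "2 * card (f ` C c) \<le> card (Mid (f ` C c) \<union> {Min (f ` C c)}) + 2"
      using chain[of "f ` C c"] finC False by simp
    also have "card (Mid (f ` C c) \<union> {Min (f ` C c)}) \<le> card (Mid (f ` C c)) + card {Min (f ` C c)}"
      by (rule card_Un_le)
    also have "card (Mid (f ` C c)) \<le> card (f ` I)" by (rule card_mono[OF finfI MidSub])
    finally show ?thesis using cardfC cardfI by simp
  qed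
  have claim2: "\<exists>c0. 2 * card (C c0) \<le> g + 2"
  proof (cases "I = {}")
    case True
    then have "g = 0" by (simp add: g_def)
    then have "2 * card (C (\<lambda>_. True)) \<le> g + 2" using claim1[of "\<lambda>_. True"] by presburger
    then show ?thesis by blast
  next
    case False
    have hm: "Min (f ` I) \<in> f ` I" using finfI False by (intro Min_in) auto
    then obtain p where p: "p \<in> I" "f p = Min (f ` I)" by auto
    define c0 where "c0 = par p"
    have pC: "p \<in> C c0" using p IS by (auto simp: C_def c0_def)
    have hmin: "f p \<le> f z" if z: "z \<in> C c0" for z
    proof (cases "z = p")
      case True then show ?thesis by simp
    next
      case False
      have "(1/2) *\<^sub>R (z + p) \<in> I" using mid[of z p] z pC False by (auto simp: C_def)
      then have "Min (f ` I) \<le> f ((1/2) *\<^sub>R (z + p))" using finfI by (intro Min_le) auto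
      then show ?thesis using p fmid[of z p] by simp
    qed
    have minA: "Min (f ` C c0) = f p"
      using finC pC hmin by (intro Min_eqI) auto
    have "2 * card (f ` C c0) \<le> card (Mid (f ` C c0) \<union> {Min (f ` C c0)}) + 2"
      using chain[of "f ` C c0"] finC pC by auto
    also have "card (Mid (f ` C c0) \<union> {Min (f ` C c0)}) \<le> card (f ` I)"
      using MidSub[of c0] minA p hm by (intro card_mono[OF finfI]) auto
    finally have "2 * card (C c0) \<le> g + 2" using cardfC[of c0] cardfI by linarith
    then show ?thesis by blast
  qed
  then obtain c0 where c0: "2 * card (C c0) \<le> g + 2" by blast
  define c1 where "c1 = (\<lambda>i. \<not> c0 i)"
  have c10: "c1 \<noteq> c0" by (metis c1_def)
  define b where "b = \<lceil>(2/3) * (real g + 1)\<rceil>"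
  have Cb: "int (card (C c)) \<le> b" for c
  proof -
    have "real (2 * card (C c)) \<le> real (g + 3)" using claim1[of c] by (simp only: of_nat_le_iff)
    then have "real (card (C c)) \<le> (real g + 3) / 2" by simp
    then show ?thesis unfolding b_def le_ceiling_iff by simp
  qed
  have fin_fun: "finite (UNIV :: ('n \<Rightarrow> bool) set)" by simp
  have "card S = (\<Sum>c\<in>UNIV. card (C c))"
  proof -
    have "card S = (\<Sum>x\<in>S. 1)" by simp
    also have "\<dots> = (\<Sum>c\<in>UNIV. \<Sum>x\<in>{x \<in> S. par x = c}. 1)"
      by (rule sum.group[symmetric, OF finS fin_fun]) simp
    finally show ?thesis by (simp add: C_def)
  qed
  then have "int (card S) = (\<Sum>c\<in>UNIV. int (card (C c)))" by simp
  also have "\<dots> = int (card (C c0)) + (\<Sum>c\<in>UNIV - {c0}. int (card (C c)))"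
    by (rule sum.remove[OF fin_fun]) simp
  also have "(\<Sum>c\<in>UNIV - {c0}. int (card (C c))) = int (card (C c1)) + (\<Sum>c\<in>UNIV - {c0} - {c1}. int (card (C c)))"
    using c10 by (intro sum.remove) auto
  also have "(\<Sum>c\<in>UNIV - {c0} - {c1}. int (card (C c))) \<le> of_nat (card (UNIV - {c0} - {c1})) * b"
    using Cb by (intro sum_bounded_above) auto
  also have "card ((UNIV :: ('n \<Rightarrow> bool) set) - {c0} - {c1}) = 2 ^ CARD('n) - 2"
  proof -
    have "(UNIV :: ('n \<Rightarrow> bool) set) - {c0} - {c1} = UNIV - {c0, c1}" by auto
    moreover have "card (UNIV - {c0, c1}) = card (UNIV :: ('n \<Rightarrow> bool) set) - card {c0, c1}"
      by (rule card_Diff_subset) auto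
    moreover have "card (UNIV :: ('n \<Rightarrow> bool) set) = 2 ^ CARD('n)" by (simp add: card_fun)
    ultimately show ?thesis using c10 by simp
  qed
  finally have main: "int (card S) \<le> int (card (C c0)) + int (card (C c1)) + int (2 ^ CARD('n) - 2) * b"
    by simp
  have m01: "int (card (C c0)) + int (card (C c1)) \<le> int g + 2" using c0 claim1[of c1] by linarith
  have pw: "(2::nat) \<le> 2 ^ CARD('n)"
    using power_increasing[of 1 "CARD('n)" "2::nat"] by simp
  have e1: "int (2 ^ CARD('n) - 2) = 2 ^ CARD('n) - 2" using pw by (simp add: of_nat_diff)
  have e2: "(2::real) * (2 ^ (CARD('n) - 1) - 1) = 2 ^ CARD('n) - 2"
  proof -
    have cn: "CARD('n) = Suc (CARD('n) - 1)" by simp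
    have "(2::real) ^ CARD('n) = 2 * 2 ^ (CARD('n) - 1)" by (subst cn) (simp only: power_Suc diff_Suc_1)
    then show ?thesis by (simp add: algebra_simps)
  qed
  have "int (card S) \<le> (2 ^ CARD('n) - 2) * b + int g + 2" using main m01 e1 by simp
  then have "real_of_int (int (card S)) \<le> real_of_int ((2 ^ CARD('n) - 2) * b + int g + 2)"
    by (simp only: of_int_le_iff)
  then have "real (card S) \<le> (2 ^ CARD('n) - 2) * real_of_int b + real g + 2" by simp
  then show ?thesis unfolding GK GI e2 b_def .
qed


end
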